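(* Let $(M,\circ,e)$ be an $F$-manifold and $\mathcal E$ an invertible vector field on $M$. (i) $\mathcal E$ is an eventual identity if and only if $$L_{\mathcal E}(\circ)(X,Y)=[e,\mathcal E]\circ X\circ Y\qquad\text{for all vector fields }X,Y \text{ on } M.$$ (ii) Suppose $\mathcal E$ is an eventual identity, and let $X*Y:=X\circ Y\circ\mathcal E^{-1}$ be the new $F$-manifold multiplication, whose unit is $\mathcal E$. Then $e$ is an eventual identity of the $F$-manifold $(M,*,\mathcal E)$. Moreover, the multiplication obtained by dualizing $(M,*,\mathcal E)$ with respect to $e$ is again $\circ$, i.e. $X*Y*e^{-1_*}=X\circ Y$, where $e^{-1_*}$ is the $*$-inverse of $e$. Hence $(M,\circ,e,\mathcal E)\mapsto(M,*,\mathcal E,e)$ is an involutive correspondence between $F$-manifolds with eventual identities.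
   Context: An $F$-manifold $(M,\circ,e)$ is a smooth manifold $M$ together with a commutative, associative, $C^\infty(M)$-bilinear multiplication $\circ$ on $TM$ with unit vector field $e$, such that $$L_{X\circ Y}(\circ)=X\circ L_Y(\circ)+Y\circ L_X(\circ)$$ for all vector fields $X,Y$. Here $$L_Z(\circ)(X,Y):=[Z,X\circ Y]-[Z,X]\circ Y-X\circ[Z,Y].$$ A vector field $\mathcal E$ is invertible if there is a vector field $\mathcal E^{-1}$ with $\mathcal E\circ\mathcal E^{-1}=e$ everywhere on $M$. An eventual identity on $(M,\circ,e)$ is an invertible vector field $\mathcal E$ such that the multiplication $X*Y:=X\circ Y\circ\mathcal E^{-1}$ defines an $F$-manifold structure on $M$ (its unit is $\mathcal E$). *)

theory Defs
  imports "HOL-Analysis.Analysis"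
begin

fun Ck_on :: "nat \<Rightarrow> ('b::euclidean_space \<Rightarrow> 'c::real_normed_vector) \<Rightarrow> 'b set \<Rightarrow> bool" where
  "Ck_on 0 f S = continuous_on S f"
| "Ck_on (Suc k) f S =
     (f differentiable_on S \<and> (\<forall>v. Ck_on k (\<lambda>x. frechet_derivative f (at x) v) S))"

definition smooth_on :: "('b::euclidean_space \<Rightarrow> 'c::real_normed_vector) \<Rightarrow> 'b set \<Rightarrow> bool" where
  "smooth_on f S \<longleftrightarrow> (\<forall>k. Ck_on k f S)"

definition chart :: "'a::topological_space set \<Rightarrow> ('a \<Rightarrow> 'b::euclidean_space) \<Rightarrow> bool" where
  "chart U \<phi> \<longleftrightarrow> open U \<and> inj_on \<phi> U \<and> continuous_on U \<phi> \<and> open (\<phi> ` U)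
     \<and> continuous_on (\<phi> ` U) (inv_into U \<phi>)"

text \<open>A smooth atlas on the whole space 'a (the manifold is the type 'a, which is
  required to be Hausdorff and second countable in the theorem).\<close>
definition smooth_atlas :: "('a::topological_space set \<times> ('a \<Rightarrow> 'b::euclidean_space)) set \<Rightarrow> bool" where
  "smooth_atlas A \<longleftrightarrow>
     (\<forall>(U,\<phi>)\<in>A. chart U \<phi>) \<and> (\<Union>(fst ` A) = UNIV) \<and>
     (\<forall>(U,\<phi>)\<in>A. \<forall>(V,\<psi>)\<in>A. smooth_on (\<psi> \<circ> inv_into U \<phi>) (\<phi> ` (U \<inter> V)))"

definition Cinf :: "('a set \<times> ('a \<Rightarrow> 'b::euclidean_space)) set \<Rightarrow> ('a \<Rightarrow> real) set" where
  "Cinf A = {f. \<forall>(U,\<phi>)\<in>A. smooth_on (f \<circ> inv_into U \<phi>) (\<phi> ` U)}"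

type_synonym 'a vfield = "('a \<Rightarrow> real) \<Rightarrow> ('a \<Rightarrow> real)"

text \<open>A (smooth) vector field is an R-linear derivation of the algebra C-infinity(M);
  for definiteness it is extended by 0 outside C-infinity(M).\<close>
definition vector_field :: "('a set \<times> ('a \<Rightarrow> 'b::euclidean_space)) set \<Rightarrow> 'a vfield \<Rightarrow> bool" where
  "vector_field A X \<longleftrightarrow>
     (\<forall>f\<in>Cinf A. X f \<in> Cinf A) \<and>
     (\<forall>f. f \<notin> Cinf A \<longrightarrow> X f = (\<lambda>x. 0)) \<and>
     (\<forall>f\<in>Cinf A. \<forall>g\<in>Cinf A. X (\<lambda>x. f x + g x) = (\<lambda>x. X f x + X g x)) \<and>
     (\<forall>f\<in>Cinf A. \<forall>c::real. X (\<lambda>x. c * f x) = (\<lambda>x. c * X f x)) \<and>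
     (\<forall>f\<in>Cinf A. \<forall>g\<in>Cinf A. X (\<lambda>x. f x * g x) = (\<lambda>x. f x * X g x + g x * X f x))"

definition vadd :: "'a vfield \<Rightarrow> 'a vfield \<Rightarrow> 'a vfield" where
  "vadd X Y = (\<lambda>f x. X f x + Y f x)"

definition vdiff :: "'a vfield \<Rightarrow> 'a vfield \<Rightarrow> 'a vfield" where
  "vdiff X Y = (\<lambda>f x. X f x - Y f x)"

definition fscale :: "('a set \<times> ('a \<Rightarrow> 'b::euclidean_space)) set \<Rightarrow> ('a \<Rightarrow> real) \<Rightarrow> 'a vfield \<Rightarrow> 'a vfield" where
  "fscale A g X = (\<lambda>f. if f \<in> Cinf A then (\<lambda>x. g x * X f x) else (\<lambda>x. 0))"

definition lie :: "('a set \<times> ('a \<Rightarrow> 'b::euclidean_space)) set \<Rightarrow> 'a vfield \<Rightarrow> 'a vfield \<Rightarrow> 'a vfield" where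
  "lie A X Y = (\<lambda>f. if f \<in> Cinf A then (\<lambda>x. X (Y f) x - Y (X f) x) else (\<lambda>x. 0))"

definition Lie_mult :: "('a set \<times> ('a \<Rightarrow> 'b::euclidean_space)) set \<Rightarrow> ('a vfield \<Rightarrow> 'a vfield \<Rightarrow> 'a vfield)
    \<Rightarrow> 'a vfield \<Rightarrow> 'a vfield \<Rightarrow> 'a vfield \<Rightarrow> 'a vfield" where
  "Lie_mult A pr Z X Y =
     vdiff (vdiff (lie A Z (pr X Y)) (pr (lie A Z X) Y)) (pr X (lie A Z Y))"

definition F_manifold :: "('a::{t2_space,second_countable_topology} set \<times> ('a \<Rightarrow> 'b::euclidean_space)) set
    \<Rightarrow> ('a vfield \<Rightarrow> 'a vfield \<Rightarrow> 'a vfield) \<Rightarrow> 'a vfield \<Rightarrow> bool" where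
  "F_manifold A pr e \<longleftrightarrow>
     smooth_atlas A \<and>
     (\<forall>X Y. vector_field A X \<longrightarrow> vector_field A Y \<longrightarrow> vector_field A (pr X Y)) \<and>
     (\<forall>X Y. vector_field A X \<longrightarrow> vector_field A Y \<longrightarrow> pr X Y = pr Y X) \<and>
     (\<forall>X Y Z. vector_field A X \<longrightarrow> vector_field A Y \<longrightarrow> vector_field A Z \<longrightarrow>
        pr (pr X Y) Z = pr X (pr Y Z)) \<and>
     (\<forall>g\<in>Cinf A. \<forall>X Y Z. vector_field A X \<longrightarrow> vector_field A Y \<longrightarrow> vector_field A Z \<longrightarrow>
        pr (vadd (fscale A g X) Y) Z = vadd (fscale A g (pr X Z)) (pr Y Z)) \<and>
     vector_field A e \<and>
     (\<forall>X. vector_field A X \<longrightarrow> pr e X = X) \<and>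
     (\<forall>X Y Z W. vector_field A X \<longrightarrow> vector_field A Y \<longrightarrow> vector_field A Z \<longrightarrow> vector_field A W \<longrightarrow>
        Lie_mult A pr (pr X Y) Z W =
          vadd (pr X (Lie_mult A pr Y Z W)) (pr Y (Lie_mult A pr X Z W)))"

definition invertible_vf :: "('a set \<times> ('a \<Rightarrow> 'b::euclidean_space)) set
    \<Rightarrow> ('a vfield \<Rightarrow> 'a vfield \<Rightarrow> 'a vfield) \<Rightarrow> 'a vfield \<Rightarrow> 'a vfield \<Rightarrow> bool" where
  "invertible_vf A pr e E \<longleftrightarrow> vector_field A E \<and> (\<exists>Y. vector_field A Y \<and> pr E Y = e)"

text \<open>The inverse of an invertible vector field (unique by associativity).\<close>
definition vinv :: "('a set \<times> ('a \<Rightarrow> 'b::euclidean_space)) set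
    \<Rightarrow> ('a vfield \<Rightarrow> 'a vfield \<Rightarrow> 'a vfield) \<Rightarrow> 'a vfield \<Rightarrow> 'a vfield \<Rightarrow> 'a vfield" where
  "vinv A pr e E = (SOME Y. vector_field A Y \<and> pr E Y = e)"

definition dual_mult :: "('a set \<times> ('a \<Rightarrow> 'b::euclidean_space)) set
    \<Rightarrow> ('a vfield \<Rightarrow> 'a vfield \<Rightarrow> 'a vfield) \<Rightarrow> 'a vfield \<Rightarrow> 'a vfield \<Rightarrow> ('a vfield \<Rightarrow> 'a vfield \<Rightarrow> 'a vfield)" where
  "dual_mult A pr e E = (\<lambda>X Y. pr (pr X Y) (vinv A pr e E))"

definition eventual_identity :: "('a::{t2_space,second_countable_topology} set \<times> ('a \<Rightarrow> 'b::euclidean_space)) set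
    \<Rightarrow> ('a vfield \<Rightarrow> 'a vfield \<Rightarrow> 'a vfield) \<Rightarrow> 'a vfield \<Rightarrow> 'a vfield \<Rightarrow> bool" where
  "eventual_identity A pr e E \<longleftrightarrow>
     invertible_vf A pr e E \<and> F_manifold A (dual_mult A pr e E) E"

end

theory Submission
  imports Defs "HOL-Library.Function_Algebras"
begin


lemma frechet_cong:
  assumes "open S" "x \<in> S" "\<forall>y\<in>S. f y = g y"
  shows "frechet_derivative f (at x) = frechet_derivative g (at x)"
proof -
  have "\<And>f'. (f has_derivative f') (at x) \<longleftrightarrow> (g has_derivative f') (at x)"
    using assms by (metis has_derivative_transform_within_open)
  thus ?thesis unfolding frechet_derivative_def by simp
qed

lemma Ck_on_cong:
  fixes f g :: "'b::euclidean_space \<Rightarrow> 'c::real_normed_vector"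
  assumes "open S" "\<forall>x\<in>S. f x = g x"
  shows "Ck_on k f S = Ck_on k g S"
  using assms(2)
proof (induction k arbitrary: f g)
  case 0 thus ?case using continuous_on_cong[of S S f g] by auto
next
  case (Suc k)
  have d: "f differentiable_on S \<longleftrightarrow> g differentiable_on S"
    using Suc.prems unfolding differentiable_on_def differentiable_def
    by (metis has_derivative_transform)
  have "Ck_on k (\<lambda>x. frechet_derivative f (at x) v) S = Ck_on k (\<lambda>x. frechet_derivative g (at x) v) S" for v
  proof (rule Suc.IH)
    show "\<forall>x\<in>S. frechet_derivative f (at x) v = frechet_derivative g (at x) v"
      using frechet_cong[OF assms(1) _ Suc.prems] by simp
  qed
  thus ?case using d by simp
qed

lemma Ck_on_mono:
  "Ck_on (Suc k) f S \<Longrightarrow> Ck_on k f S"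
proof (induction k arbitrary: f)
  case 0 thus ?case by (simp add: differentiable_imp_continuous_on)
next
  case (Suc k) thus ?case by simp
qed

lemma Ck_on_const: "Ck_on k (\<lambda>x. c) S"
proof (induction k arbitrary: c)
  case 0 thus ?case by simp
next
  case (Suc k)
  have "frechet_derivative (\<lambda>x. c) (at x) = (\<lambda>v. 0)" for x
    by (metis frechet_derivative_at has_derivative_const)
  thus ?case using Suc by simp
qed

lemma Ck_on_add:
  fixes f g :: "'b::euclidean_space \<Rightarrow> 'c::real_normed_vector"
  assumes "open S"
  shows "Ck_on k f S \<Longrightarrow> Ck_on k g S \<Longrightarrow> Ck_on k (\<lambda>x. f x + g x) S"
proof (induction k arbitrary: f g)
  case 0 thus ?case by (simp add: continuous_on_add)
next
  case (Suc k)
  have df: "f differentiable_on S" and dg: "g differentiable_on S" using Suc.prems by auto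
  have eq: "\<forall>x\<in>S. frechet_derivative (\<lambda>x. f x + g x) (at x) v
      = frechet_derivative f (at x) v + frechet_derivative g (at x) v" for v
  proof
    fix x assume x: "x \<in> S"
    have "f differentiable at x" "g differentiable at x"
      using df dg x assms differentiable_on_eq_differentiable_at by blast+
    hence "((\<lambda>x. f x + g x) has_derivative (\<lambda>v. frechet_derivative f (at x) v + frechet_derivative g (at x) v)) (at x)"
      by (intro has_derivative_add) (simp_all add: frechet_derivative_works[symmetric])
    from frechet_derivative_at[OF this] show "frechet_derivative (\<lambda>x. f x + g x) (at x) v
      = frechet_derivative f (at x) v + frechet_derivative g (at x) v" by metis
  qed
  have "Ck_on k (\<lambda>x. frechet_derivative (\<lambda>x. f x + g x) (at x) v) S" for v
    using Ck_on_cong[OF assms eq[of v]] Suc by simp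
  thus ?case using df dg by simp
qed

lemma Ck_on_mult:
  fixes f g :: "'b::euclidean_space \<Rightarrow> real"
  assumes "open S"
  shows "Ck_on k f S \<Longrightarrow> Ck_on k g S \<Longrightarrow> Ck_on k (\<lambda>x. f x * g x) S"
proof (induction k arbitrary: f g)
  case 0 thus ?case by (simp add: continuous_on_mult)
next
  case (Suc k)
  have df: "f differentiable_on S" and dg: "g differentiable_on S" using Suc.prems by auto
  have eq: "\<forall>x\<in>S. frechet_derivative (\<lambda>x. f x * g x) (at x) v
      = f x * frechet_derivative g (at x) v + frechet_derivative f (at x) v * g x" for v
  proof
    fix x assume x: "x \<in> S"
    have "f differentiable at x" "g differentiable at x"
      using df dg x assms differentiable_on_eq_differentiable_at by blast+
    hence "((\<lambda>x. f x * g x) has_derivative (\<lambda>v. f x * frechet_derivative g (at x) v + frechet_derivative f (at x) v * g x)) (at x)"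
      by (intro has_derivative_mult) (simp_all add: frechet_derivative_works[symmetric])
    from frechet_derivative_at[OF this] show "frechet_derivative (\<lambda>x. f x * g x) (at x) v
      = f x * frechet_derivative g (at x) v + frechet_derivative f (at x) v * g x" by metis
  qed
  have "Ck_on k (\<lambda>x. frechet_derivative (\<lambda>x. f x * g x) (at x) v) S" for v
  proof -
    have "Ck_on k (\<lambda>x. f x * frechet_derivative g (at x) v + frechet_derivative f (at x) v * g x) S"
    proof (rule Ck_on_add[OF assms])
      have "Ck_on k f S" "Ck_on k g S" using Suc.prems Ck_on_mono by blast+
      then show "Ck_on k (\<lambda>x. f x * frechet_derivative g (at x) v) S"
        "Ck_on k (\<lambda>x. frechet_derivative f (at x) v * g x) S"
        using Suc.IH Suc.prems by auto
    qed
    thus ?thesis using Ck_on_cong[OF assms eq[of v]] by simp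
  qed
  thus ?case using df dg by simp
qed


lemma atlas_open: "smooth_atlas A \<Longrightarrow> (U,\<phi>) \<in> A \<Longrightarrow> open (\<phi> ` U)"
  unfolding smooth_atlas_def chart_def by fastforce

lemma Cinf_iff: "f \<in> Cinf A \<longleftrightarrow> (\<forall>U \<phi> k. (U,\<phi>) \<in> A \<longrightarrow> Ck_on k (\<lambda>y. f (inv_into U \<phi> y)) (\<phi> ` U))"
  unfolding Cinf_def smooth_on_def comp_def by auto

lemma Cinf_const[simp]: "(\<lambda>x. c) \<in> Cinf A"
  by (simp add: Cinf_iff Ck_on_const)

lemma Cinf_add[simp]: "smooth_atlas A \<Longrightarrow> f \<in> Cinf A \<Longrightarrow> g \<in> Cinf A \<Longrightarrow> (\<lambda>x. f x + g x) \<in> Cinf A"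
  unfolding Cinf_iff using Ck_on_add[OF atlas_open] by blast

lemma Cinf_mult[simp]: "smooth_atlas A \<Longrightarrow> f \<in> Cinf A \<Longrightarrow> g \<in> Cinf A \<Longrightarrow> (\<lambda>x. f x * g x) \<in> Cinf A"
  unfolding Cinf_iff using Ck_on_mult[OF atlas_open] by blast

lemma Cinf_diff[simp]: "smooth_atlas A \<Longrightarrow> f \<in> Cinf A \<Longrightarrow> g \<in> Cinf A \<Longrightarrow> (\<lambda>x. f x - g x) \<in> Cinf A"
proof -
  assume a: "smooth_atlas A" "f \<in> Cinf A" "g \<in> Cinf A"
  have "(\<lambda>x. f x + (\<lambda>x. -1) x * g x) \<in> Cinf A"
    using a by (intro Cinf_add Cinf_mult) auto
  thus ?thesis by simp
qed

lemma Cinf_scale[simp]: "smooth_atlas A \<Longrightarrow> f \<in> Cinf A \<Longrightarrow> (\<lambda>x. c * f x) \<in> Cinf A"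
  using Cinf_mult[of A "\<lambda>x. c" f] by simp


lemma Cinf_add'[simp]: "smooth_atlas A \<Longrightarrow> f \<in> Cinf A \<Longrightarrow> g \<in> Cinf A \<Longrightarrow> f + g \<in> Cinf A"
  using Cinf_add[of A f g] by (simp add: plus_fun_def)
lemma Cinf_mult'[simp]: "smooth_atlas A \<Longrightarrow> f \<in> Cinf A \<Longrightarrow> g \<in> Cinf A \<Longrightarrow> f * g \<in> Cinf A"
  using Cinf_mult[of A f g] by (simp add: times_fun_def)
lemma Cinf_diff'[simp]: "smooth_atlas A \<Longrightarrow> f \<in> Cinf A \<Longrightarrow> g \<in> Cinf A \<Longrightarrow> f - g \<in> Cinf A"
  using Cinf_diff[of A f g] by (simp add: fun_diff_def)
lemma Cinf_uminus'[simp]: "smooth_atlas A \<Longrightarrow> f \<in> Cinf A \<Longrightarrow> - f \<in> Cinf A"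
  using Cinf_scale[of A f "-1"] by (simp add: fun_Compl_def)
lemma Cinf_zero'[simp]: "(0::'a\<Rightarrow>real) \<in> Cinf A"
  using Cinf_const[of 0 A] by (simp add: zero_fun_def)
lemma vf_Cinf[simp]: "vector_field A X \<Longrightarrow> f \<in> Cinf A \<Longrightarrow> X f \<in> Cinf A"
  unfolding vector_field_def by blast
lemma vf_out: "vector_field A X \<Longrightarrow> f \<notin> Cinf A \<Longrightarrow> X f = (\<lambda>x. 0)"
  unfolding vector_field_def by blast
lemma vf_addf[simp]: "vector_field A X \<Longrightarrow> f \<in> Cinf A \<Longrightarrow> g \<in> Cinf A \<Longrightarrow> X (\<lambda>x. f x + g x) = (\<lambda>x. X f x + X g x)"
  unfolding vector_field_def by blast
lemma vf_scalef[simp]: "vector_field A X \<Longrightarrow> f \<in> Cinf A \<Longrightarrow> X (\<lambda>x. c * f x) = (\<lambda>x. c * X f x)"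
  unfolding vector_field_def by blast
lemma vf_multf[simp]: "vector_field A X \<Longrightarrow> f \<in> Cinf A \<Longrightarrow> g \<in> Cinf A \<Longrightarrow> X (\<lambda>x. f x * g x) = (\<lambda>x. f x * X g x + g x * X f x)"
  unfolding vector_field_def by blast

lemma vf_intro:
  assumes "\<And>f. f \<in> Cinf A \<Longrightarrow> X f \<in> Cinf A"
    "\<And>f. f \<notin> Cinf A \<Longrightarrow> X f = (\<lambda>x. 0)"
    "\<And>f g. f \<in> Cinf A \<Longrightarrow> g \<in> Cinf A \<Longrightarrow> X (\<lambda>x. f x + g x) = (\<lambda>x. X f x + X g x)"
    "\<And>f c. f \<in> Cinf A \<Longrightarrow> X (\<lambda>x. c * f x) = (\<lambda>x. c * X f x)"
    "\<And>f g. f \<in> Cinf A \<Longrightarrow> g \<in> Cinf A \<Longrightarrow> X (\<lambda>x. f x * g x) = (\<lambda>x. f x * X g x + g x * X f x)"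
  shows "vector_field A X"
  unfolding vector_field_def using assms by blast

lemma plus_vf_apply: "(X + Y) f = (\<lambda>x. X f x + Y f x)" for X Y :: "'a vfield"
  by (simp add: fun_eq_iff)
lemma minus_vf_apply: "(X - Y) f = (\<lambda>x. X f x - Y f x)" for X Y :: "'a vfield"
  by (simp add: fun_eq_iff)
lemma uminus_vf_apply: "(- X) f = (\<lambda>x. - X f x)" for X :: "'a vfield"
  by (simp add: fun_eq_iff)
lemma zero_vf_apply: "(0::'a vfield) f = (\<lambda>x. 0)"
  by (simp add: fun_eq_iff)

lemma vf_add[simp]: "smooth_atlas A \<Longrightarrow> vector_field A X \<Longrightarrow> vector_field A Y \<Longrightarrow> vector_field A (X + Y)"
  by (rule vf_intro) (auto simp: plus_vf_apply vf_out algebra_simps)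
lemma vf_diff[simp]: "smooth_atlas A \<Longrightarrow> vector_field A X \<Longrightarrow> vector_field A Y \<Longrightarrow> vector_field A (X - Y)"
  by (rule vf_intro) (auto simp: minus_vf_apply vf_out algebra_simps)
lemma vf_uminus[simp]: "smooth_atlas A \<Longrightarrow> vector_field A X \<Longrightarrow> vector_field A (- X)"
  by (rule vf_intro) (auto simp: uminus_vf_apply vf_out algebra_simps)
lemma vf_zero[simp]: "vector_field A 0"
  by (rule vf_intro) (auto simp: zero_vf_apply)

lemma vf_lie[simp]:
  assumes sa: "smooth_atlas A" and X: "vector_field A X" and Y: "vector_field A Y"
  shows "vector_field A (lie A X Y)"
proof (rule vf_intro)
  fix f g assume f: "f \<in> Cinf A" and g: "g \<in> Cinf A"
  have fg: "(\<lambda>x. f x * g x) \<in> Cinf A" using sa f g by simp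
  have 1: "X (\<lambda>x. f x * Y g x + g x * Y f x) = (\<lambda>x. X (\<lambda>x. f x * Y g x) x + X (\<lambda>x. g x * Y f x) x)"
    by (rule vf_addf[OF X]) (use sa f g Y in simp_all)
  have 2: "Y (\<lambda>x. f x * X g x + g x * X f x) = (\<lambda>x. Y (\<lambda>x. f x * X g x) x + Y (\<lambda>x. g x * X f x) x)"
    by (rule vf_addf[OF Y]) (use sa f g X in simp_all)
  have 3: "X (\<lambda>x. f x * Y g x) = (\<lambda>x. f x * X (Y g) x + Y g x * X f x)"
    by (rule vf_multf[OF X f]) (use g Y in simp)
  have 4: "X (\<lambda>x. g x * Y f x) = (\<lambda>x. g x * X (Y f) x + Y f x * X g x)"
    by (rule vf_multf[OF X g]) (use f Y in simp)
  have 5: "Y (\<lambda>x. f x * X g x) = (\<lambda>x. f x * Y (X g) x + X g x * Y f x)"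
    by (rule vf_multf[OF Y f]) (use g X in simp)
  have 6: "Y (\<lambda>x. g x * X f x) = (\<lambda>x. g x * Y (X f) x + X f x * Y g x)"
    by (rule vf_multf[OF Y g]) (use f X in simp)
  show "lie A X Y (\<lambda>x. f x * g x) = (\<lambda>x. f x * lie A X Y g x + g x * lie A X Y f x)"
    unfolding lie_def using fg f g X Y
    by (simp only: if_True vf_multf 1 2 3 4 5 6) (simp add: algebra_simps)
qed (use sa X Y in \<open>auto simp: lie_def algebra_simps\<close>)


lemma vadd_eq: "vadd X Y = X + Y" by (simp add: vadd_def fun_eq_iff)
lemma vdiff_eq: "vdiff X Y = X - Y" by (simp add: vdiff_def fun_eq_iff)

lemma lie_antisym: "lie A X Y = - lie A Y X"
  by (simp add: lie_def fun_eq_iff)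
lemma lie_self: "lie A X X = 0"
  by (simp add: lie_def fun_eq_iff)

locale FM =
  fixes A :: "('a::{t2_space,second_countable_topology} set \<times> ('a \<Rightarrow> 'b::euclidean_space)) set"
    and pr :: "'a vfield \<Rightarrow> 'a vfield \<Rightarrow> 'a vfield"
    and e :: "'a vfield"
  assumes F: "F_manifold A pr e"
begin

lemmas F0 = F[unfolded F_manifold_def]
lemmas Fs = F0[THEN conjunct1] F0[THEN conjunct2, THEN conjunct1]
  F0[THEN conjunct2, THEN conjunct2, THEN conjunct1]
  F0[THEN conjunct2, THEN conjunct2, THEN conjunct2, THEN conjunct1]
  F0[THEN conjunct2, THEN conjunct2, THEN conjunct2, THEN conjunct2, THEN conjunct1]
  F0[THEN conjunct2, THEN conjunct2, THEN conjunct2, THEN conjunct2, THEN conjunct2, THEN conjunct1]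
  F0[THEN conjunct2, THEN conjunct2, THEN conjunct2, THEN conjunct2, THEN conjunct2, THEN conjunct2, THEN conjunct1]
  F0[THEN conjunct2, THEN conjunct2, THEN conjunct2, THEN conjunct2, THEN conjunct2, THEN conjunct2, THEN conjunct2]

lemma sa[simp]: "smooth_atlas A" by (rule Fs(1))
lemma pr_vf[simp]: "vector_field A X \<Longrightarrow> vector_field A Y \<Longrightarrow> vector_field A (pr X Y)"
  using Fs(2) by blast
lemma pr_comm: "vector_field A X \<Longrightarrow> vector_field A Y \<Longrightarrow> pr X Y = pr Y X"
  using Fs(3) by blast
lemma pr_assoc: "vector_field A X \<Longrightarrow> vector_field A Y \<Longrightarrow> vector_field A Z \<Longrightarrow> pr (pr X Y) Z = pr X (pr Y Z)"
  using Fs(4) by blast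
lemma pr_lin: "g \<in> Cinf A \<Longrightarrow> vector_field A X \<Longrightarrow> vector_field A Y \<Longrightarrow> vector_field A Z \<Longrightarrow>
        pr (vadd (fscale A g X) Y) Z = vadd (fscale A g (pr X Z)) (pr Y Z)"
  using Fs(5) by blast
lemma e_vf[simp]: "vector_field A e" by (rule Fs(6))
lemma pr_e[simp]: "vector_field A X \<Longrightarrow> pr e X = X" using Fs(7) by blast
lemma Fc: "vector_field A X \<Longrightarrow> vector_field A Y \<Longrightarrow> vector_field A Z \<Longrightarrow> vector_field A W \<Longrightarrow>
        Lie_mult A pr (pr X Y) Z W = pr X (Lie_mult A pr Y Z W) + pr Y (Lie_mult A pr X Z W)"
  using Fs(8) unfolding vadd_eq by blast

lemma pr_e_right[simp]: "vector_field A X \<Longrightarrow> pr X e = X"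
  using pr_comm[of X e] by simp

lemma pr_left_commute: "vector_field A X \<Longrightarrow> vector_field A Y \<Longrightarrow> vector_field A Z \<Longrightarrow> pr X (pr Y Z) = pr Y (pr X Z)"
proof -
  assume a: "vector_field A X" "vector_field A Y" "vector_field A Z"
  have "pr X (pr Y Z) = pr (pr X Y) Z" using a by (simp add: pr_assoc)
  also have "\<dots> = pr (pr Y X) Z" using a pr_comm[of X Y] by simp
  also have "\<dots> = pr Y (pr X Z)" using a by (simp add: pr_assoc)
  finally show ?thesis .
qed

lemma fscale_one: "vector_field A X \<Longrightarrow> fscale A (\<lambda>x. 1) X = X"
  by (auto simp: fscale_def fun_eq_iff vf_out)

lemma pr_add_left: "vector_field A X \<Longrightarrow> vector_field A Y \<Longrightarrow> vector_field A Z \<Longrightarrow> pr (X + Y) Z = pr X Z + pr Y Z"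
  using pr_lin[of "\<lambda>x. 1" X Y Z] by (simp add: fscale_one vadd_eq)
lemma pr_add_right: "vector_field A X \<Longrightarrow> vector_field A Y \<Longrightarrow> vector_field A Z \<Longrightarrow> pr Z (X + Y) = pr Z X + pr Z Y"
  using pr_add_left[of X Y Z] pr_comm[of Z "X+Y"] pr_comm[of Z X] pr_comm[of Z Y] by simp
lemma pr_zero_left: "vector_field A Z \<Longrightarrow> pr 0 Z = 0"
  using pr_add_left[of 0 0 Z] by simp
lemma pr_zero_right: "vector_field A Z \<Longrightarrow> pr Z 0 = 0"
  using pr_zero_left[of Z] pr_comm[of Z 0] by simp
lemma pr_uminus_left: "vector_field A X \<Longrightarrow> vector_field A Z \<Longrightarrow> pr (- X) Z = - pr X Z"
  using pr_add_left[of X "-X" Z] pr_zero_left[of Z] by (simp add: eq_neg_iff_add_eq_0 add.commute)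
lemma pr_uminus_right: "vector_field A X \<Longrightarrow> vector_field A Z \<Longrightarrow> pr Z (- X) = - pr Z X"
  using pr_uminus_left[of X Z] pr_comm[of Z "-X"] pr_comm[of Z X] by simp
lemma pr_diff_left: "vector_field A X \<Longrightarrow> vector_field A Y \<Longrightarrow> vector_field A Z \<Longrightarrow> pr (X - Y) Z = pr X Z - pr Y Z"
  using pr_add_left[of X "-Y" Z] pr_uminus_left[of Y Z] by simp
lemma pr_diff_right: "vector_field A X \<Longrightarrow> vector_field A Y \<Longrightarrow> vector_field A Z \<Longrightarrow> pr Z (X - Y) = pr Z X - pr Z Y"
  using pr_diff_left[of X Y Z] pr_comm[of Z "X-Y"] pr_comm[of Z X] pr_comm[of Z Y] by simp

lemma Lie_mult_eq: "Lie_mult A pr Z X Y = lie A Z (pr X Y) - pr (lie A Z X) Y - pr X (lie A Z Y)"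
  unfolding Lie_mult_def vdiff_eq ..

lemma Lie_vf[simp]: "vector_field A Z \<Longrightarrow> vector_field A X \<Longrightarrow> vector_field A Y \<Longrightarrow> vector_field A (Lie_mult A pr Z X Y)"
  unfolding Lie_mult_eq by simp

lemmas R = pr_add_left pr_add_right pr_diff_left pr_diff_right pr_uminus_left pr_uminus_right
  pr_zero_left pr_zero_right pr_assoc pr_comm pr_left_commute

lemma Lie_mult_gen: "Lie_mult A p Z X Y = lie A Z (p X Y) - p (lie A Z X) Y - p X (lie A Z Y)"
  unfolding Lie_mult_def vdiff_eq ..

abbreviation "L \<equiv> Lie_mult A pr"

lemma star_L:
  assumes "vector_field A S" "vector_field A Z" "vector_field A W" "vector_field A P"
  shows "Lie_mult A (\<lambda>X Y. pr (pr X Y) P) S Z W = L S (pr Z W) P + pr (L S Z W) P + pr (pr Z W) (lie A S P)"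
  using assms unfolding Lie_mult_gen by (simp add: R algebra_simps)

lemma D_lemma:
  assumes X: "vector_field A X" and Y: "vector_field A Y" and Z: "vector_field A Z"
    and W: "vector_field A W" and P: "vector_field A P"
  shows "Lie_mult A (\<lambda>X Y. pr (pr X Y) P) (pr (pr X Y) P) Z W
     - (pr (pr X (Lie_mult A (\<lambda>X Y. pr (pr X Y) P) Y Z W)) P
        + pr (pr Y (Lie_mult A (\<lambda>X Y. pr (pr X Y) P) X Z W)) P)
   = pr (pr X Y) (L P (pr Z W) P) + pr (pr (pr X Y) P) (L P Z W)
     - pr (pr Z W) (L P (pr X Y) P) - pr (pr (pr Z W) P) (L P X Y)"
proof -
  note vs = X Y Z W P
  have 1: "Lie_mult A (\<lambda>X Y. pr (pr X Y) P) (pr (pr X Y) P) Z W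
     = L (pr (pr X Y) P) (pr Z W) P + pr (L (pr (pr X Y) P) Z W) P + pr (pr Z W) (lie A (pr (pr X Y) P) P)"
    using vs by (simp add: star_L)
  have 2: "Lie_mult A (\<lambda>X Y. pr (pr X Y) P) Y Z W = L Y (pr Z W) P + pr (L Y Z W) P + pr (pr Z W) (lie A Y P)"
    using vs by (simp add: star_L)
  have 3: "Lie_mult A (\<lambda>X Y. pr (pr X Y) P) X Z W = L X (pr Z W) P + pr (L X Z W) P + pr (pr Z W) (lie A X P)"
    using vs by (simp add: star_L)
  have F1: "L (pr (pr X Y) P) u v = pr (pr X Y) (L P u v) + pr P (pr X (L Y u v) + pr Y (L X u v))"
    if "vector_field A u" "vector_field A v" for u v
    using vs that by (simp add: Fc)
  have l1: "lie A (pr (pr X Y) P) P = - (L P (pr X Y) P + pr (L P X Y + pr (lie A P X) Y + pr X (lie A P Y)) P)"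
    using vs unfolding Lie_mult_eq by (subst lie_antisym) (simp add: lie_self R algebra_simps)
  have l2: "lie A Y P = - lie A P Y" "lie A X P = - lie A P X" by (rule lie_antisym)+
  show ?thesis
    apply (simp only: 1 2 3)
    apply (simp only: F1 vs pr_vf l1 l2)
    using vs by (simp add: R algebra_simps)
qed



lemma L_e_zero:
  assumes "vector_field A u" "vector_field A v"
  shows "L e u v = 0"
proof -
  have "L (pr e e) u v = pr e (L e u v) + pr e (L e u v)" by (rule Fc) (use assms in simp_all)
  moreover have "pr e e = e" "pr e (L e u v) = L e u v" using assms by simp_all
  ultimately have "L e u v = L e u v + L e u v" by simp
  thus ?thesis by (metis add_cancel_right_right)
qed

lemma cancel:
  assumes "pr E P = e" "vector_field A E" "vector_field A P" "vector_field A V1" "vector_field A V2"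
    and "pr P V1 = pr P V2"
  shows "V1 = V2"
proof -
  have "V1 = pr (pr E P) V1" using assms(1,4) by simp
  also have "\<dots> = pr E (pr P V1)" using assms(2,3,4) by (simp add: pr_assoc)
  also have "\<dots> = pr E (pr P V2)" by (simp only: assms(6))
  also have "\<dots> = pr (pr E P) V2" using assms(2,3,5) by (simp add: pr_assoc)
  finally show ?thesis using assms(1,5) by simp
qed

lemma LP:
  assumes EP: "pr E P = e" and E: "vector_field A E" and P: "vector_field A P"
    and u: "vector_field A u" and v: "vector_field A v"
  shows "L P u v = - pr (pr P P) (L E u v)"
proof -
  have "0 = pr E (L P u v) + pr P (L E u v)"
    using Fc[OF E P u v] L_e_zero[OF u v] EP by simp
  hence h: "pr E (L P u v) = - pr P (L E u v)" by (simp add: eq_neg_iff_add_eq_0)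
  have "L P u v = pr (pr P E) (L P u v)" using EP E P u v pr_comm[of P E] by simp
  also have "\<dots> = pr P (pr E (L P u v))" using E P u v by (simp add: pr_assoc)
  also have "\<dots> = - pr (pr P P) (L E u v)" using h E P u v by (simp add: R)
  finally show ?thesis .
qed

lemma LEe:
  assumes E: "vector_field A E" and Z: "vector_field A Z"
  shows "L E Z e = pr (lie A e E) Z" "L E e Z = pr (lie A e E) Z"
proof -
  have a: "lie A E e = - lie A e E" by (rule lie_antisym)
  show "L E Z e = pr (lie A e E) Z" using assms unfolding Lie_mult_eq a by (simp add: R)
  show "L E e Z = pr (lie A e E) Z" using assms unfolding Lie_mult_eq a by (simp add: R)
qed

lemma main_equiv:
  assumes EP: "pr E P = e" and E: "vector_field A E" and P: "vector_field A P"
  shows "(\<forall>X Y Z W. vector_field A X \<longrightarrow> vector_field A Y \<longrightarrow> vector_field A Z \<longrightarrow> vector_field A W \<longrightarrow>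
        Lie_mult A (\<lambda>X Y. pr (pr X Y) P) (pr (pr X Y) P) Z W =
          vadd (pr (pr X (Lie_mult A (\<lambda>X Y. pr (pr X Y) P) Y Z W)) P)
               (pr (pr Y (Lie_mult A (\<lambda>X Y. pr (pr X Y) P) X Z W)) P))
     \<longleftrightarrow> (\<forall>X Y. vector_field A X \<longrightarrow> vector_field A Y \<longrightarrow> L E X Y = pr (pr (lie A e E) X) Y)"
    (is "?F \<longleftrightarrow> ?T")
proof -
  define Q where "Q X Y Z W = pr (pr X Y) (L E (pr Z W) P) + pr (pr (pr X Y) P) (L E Z W)
      - pr (pr Z W) (L E (pr X Y) P) - pr (pr (pr Z W) P) (L E X Y)" for X Y Z W
  note LP' = LP[OF EP E P]
  have Qvf: "vector_field A (Q X Y Z W)" if "vector_field A X" "vector_field A Y" "vector_field A Z" "vector_field A W" for X Y Z W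
    using that E P unfolding Q_def by simp
  have key: "(Lie_mult A (\<lambda>X Y. pr (pr X Y) P) (pr (pr X Y) P) Z W =
          vadd (pr (pr X (Lie_mult A (\<lambda>X Y. pr (pr X Y) P) Y Z W)) P)
               (pr (pr Y (Lie_mult A (\<lambda>X Y. pr (pr X Y) P) X Z W)) P))
        \<longleftrightarrow> Q X Y Z W = 0"
    if X: "vector_field A X" and Y: "vector_field A Y" and Z: "vector_field A Z" and W: "vector_field A W" for X Y Z W
  proof -
    have DQ: "pr (pr X Y) (L P (pr Z W) P) + pr (pr (pr X Y) P) (L P Z W)
     - pr (pr Z W) (L P (pr X Y) P) - pr (pr (pr Z W) P) (L P X Y) = - pr P (pr P (Q X Y Z W))"
      using X Y Z W E P unfolding Q_def by (simp add: LP' R algebra_simps)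
    have "(Lie_mult A (\<lambda>X Y. pr (pr X Y) P) (pr (pr X Y) P) Z W =
          vadd (pr (pr X (Lie_mult A (\<lambda>X Y. pr (pr X Y) P) Y Z W)) P)
               (pr (pr Y (Lie_mult A (\<lambda>X Y. pr (pr X Y) P) X Z W)) P))
        \<longleftrightarrow> - pr P (pr P (Q X Y Z W)) = 0"
      unfolding vadd_eq DQ[symmetric] D_lemma[OF X Y Z W P, symmetric] by simp
    also have "\<dots> \<longleftrightarrow> Q X Y Z W = 0"
    proof
      assume "- pr P (pr P (Q X Y Z W)) = 0"
      hence h1: "pr P (pr P (Q X Y Z W)) = pr P (pr P 0)" using P by (simp add: pr_zero_right)
      have h2: "pr P (Q X Y Z W) = pr P 0"
        by (rule cancel[OF EP E P _ _ h1]) (use P Qvf[OF X Y Z W] in simp_all)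
      show "Q X Y Z W = 0"
        by (rule cancel[OF EP E P _ _ h2]) (use P Qvf[OF X Y Z W] in simp_all)
    qed (use P in \<open>simp add: pr_zero_right\<close>)
    finally show ?thesis .
  qed
  show ?thesis
  proof
    assume T: ?T
    have T': "L E X Y = pr (pr (lie A e E) X) Y" if "vector_field A X" "vector_field A Y" for X Y
      using T that by blast
    show ?F
    proof (intro allI impI)
      fix X Y Z W assume vs: "vector_field A X" "vector_field A Y" "vector_field A Z" "vector_field A W"
      have "Q X Y Z W = 0" unfolding Q_def using vs E P by (simp add: T' R algebra_simps)
      thus "Lie_mult A (\<lambda>X Y. pr (pr X Y) P) (pr (pr X Y) P) Z W =
          vadd (pr (pr X (Lie_mult A (\<lambda>X Y. pr (pr X Y) P) Y Z W)) P)
               (pr (pr Y (Lie_mult A (\<lambda>X Y. pr (pr X Y) P) X Z W)) P)"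
        using key[OF vs] by simp
    qed
  next
    assume Fs: ?F
    have Q0: "Q X Y Z W = 0" if "vector_field A X" "vector_field A Y" "vector_field A Z" "vector_field A W" for X Y Z W
    proof -
      have "Lie_mult A (\<lambda>X Y. pr (pr X Y) P) (pr (pr X Y) P) Z W =
          vadd (pr (pr X (Lie_mult A (\<lambda>X Y. pr (pr X Y) P) Y Z W)) P)
               (pr (pr Y (Lie_mult A (\<lambda>X Y. pr (pr X Y) P) X Z W)) P)"
        using Fs that by simp
      thus ?thesis using key[OF that] by simp
    qed
    define c where "c = lie A e E"
    have c: "vector_field A c" unfolding c_def using E by simp
    note LEe' = LEe[OF E, folded c_def]
    have a: "pr X (L E Z P) = pr Z (L E X P)" if X: "vector_field A X" and Z: "vector_field A Z" for X Z
    proof -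
      have "Q X e Z e = 0" using Q0 X Z by simp
      thus ?thesis unfolding Q_def using X Z E P c by (simp add: LEe' R algebra_simps)
    qed
    define K where "K = L E E P"
    have K: "vector_field A K" unfolding K_def using E P by simp
    have b: "L E Z P = pr (pr P Z) K" if Z: "vector_field A Z" for Z
    proof -
      have "pr E (L E Z P) = pr Z K" using a[OF E Z] unfolding K_def .
      hence "pr P (pr E (L E Z P)) = pr P (pr Z K)" by simp
      moreover have "pr P (pr E V) = V" if "vector_field A V" for V
        using pr_assoc[of P E V, symmetric] pr_comm[of P E] EP E P that by simp
      moreover have "pr E (pr P V) = V" if "vector_field A V" for V
        using pr_assoc[of E P V, symmetric] EP E P that by simp
      ultimately show ?thesis using Z E P K EP by (simp add: R)
    qed
    have d: "L E Z W = pr (pr Z W) c" if Z: "vector_field A Z" and W: "vector_field A W" for Z W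
    proof -
      have "Q e e Z W = 0" using Q0 Z W by simp
      hence h: "pr P (L E Z W) = pr P (pr (pr Z W) c)"
        unfolding Q_def using Z W E P c K by (simp add: b LEe' R algebra_simps)
      show ?thesis by (rule cancel[OF EP E P _ _ h]) (use Z W c K E in simp_all)
    qed
    show ?T using d c by (auto simp: c_def R)
  qed
qed


lemma vf_fscale[simp]: "g \<in> Cinf A \<Longrightarrow> vector_field A X \<Longrightarrow> vector_field A (fscale A g X)"
  by (rule vf_intro) (auto simp: fscale_def algebra_simps)

lemma F_cong:
  assumes p: "\<And>X Y. vector_field A X \<Longrightarrow> vector_field A Y \<Longrightarrow> p' X Y = pr X Y"
  shows "F_manifold A p' e"
proof -
  have Lm: "Lie_mult A p' Z X Y = L Z X Y" if "vector_field A Z" "vector_field A X" "vector_field A Y" for Z X Y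
    using that unfolding Lie_mult_gen by (simp add: p)
  show ?thesis unfolding F_manifold_def
  proof (intro conjI allI impI ballI)
    fix g X Y Z assume "g \<in> Cinf A" "vector_field A X" "vector_field A Y" "vector_field A Z"
    thus "p' (vadd (fscale A g X) Y) Z = vadd (fscale A g (p' X Z)) (p' Y Z)"
      using pr_lin[of g X Y Z] by (simp add: p vadd_eq)
  next
    fix X Y Z W assume "vector_field A X" "vector_field A Y" "vector_field A Z" "vector_field A W"
    thus "Lie_mult A p' (p' X Y) Z W = vadd (p' X (Lie_mult A p' Y Z W)) (p' Y (Lie_mult A p' X Z W))"
      by (simp add: p Lm Fc vadd_eq)
  qed (auto simp: p R)
qed

end

theorem theorem1p3:
  fixes A :: "('a::{t2_space,second_countable_topology} set \<times> ('a \<Rightarrow> 'b::euclidean_space)) set"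
    and pr :: "'a vfield \<Rightarrow> 'a vfield \<Rightarrow> 'a vfield"
    and e E :: "'a vfield"
  assumes F: "F_manifold A pr e"
    and inv: "invertible_vf A pr e E"
  shows "(eventual_identity A pr e E \<longleftrightarrow>
            (\<forall>X Y. vector_field A X \<longrightarrow> vector_field A Y \<longrightarrow>
               Lie_mult A pr E X Y = pr (pr (lie A e E) X) Y))
       \<and> (eventual_identity A pr e E \<longrightarrow>
            (let star = dual_mult A pr e E in
               eventual_identity A star E e \<and>
               (\<forall>X Y. vector_field A X \<longrightarrow> vector_field A Y \<longrightarrow>
                  star (star X Y) (vinv A star E e) = pr X Y)))"
proof -
  interpret FM A pr e by (rule FM.intro[OF F])
  define P where "P = vinv A pr e E"
  have E: "vector_field A E" using inv unfolding invertible_vf_def by blast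
  have "\<exists>Y. vector_field A Y \<and> pr E Y = e" using inv unfolding invertible_vf_def by blast
  hence "vector_field A P \<and> pr E P = e" unfolding P_def vinv_def by (rule someI_ex)
  hence P: "vector_field A P" and EP: "pr E P = e" by auto
  have star: "dual_mult A pr e E = (\<lambda>X Y. pr (pr X Y) P)"
    unfolding dual_mult_def P_def ..
  have EPX: "pr (pr E X) P = X" if "vector_field A X" for X
  proof -
    have "pr (pr E X) P = pr (pr E P) X" using that E P by (simp add: R)
    thus ?thesis using EP that by simp
  qed
  have Fiff: "F_manifold A (\<lambda>X Y. pr (pr X Y) P) E \<longleftrightarrow>
     (\<forall>X Y Z W. vector_field A X \<longrightarrow> vector_field A Y \<longrightarrow> vector_field A Z \<longrightarrow> vector_field A W \<longrightarrow>
        Lie_mult A (\<lambda>X Y. pr (pr X Y) P) (pr (pr X Y) P) Z W =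
          vadd (pr (pr X (Lie_mult A (\<lambda>X Y. pr (pr X Y) P) Y Z W)) P)
               (pr (pr Y (Lie_mult A (\<lambda>X Y. pr (pr X Y) P) X Z W)) P))"
    unfolding F_manifold_def
  proof (intro iffI; (elim conjE)?)
    assume "\<forall>X Y Z W. vector_field A X \<longrightarrow> vector_field A Y \<longrightarrow> vector_field A Z \<longrightarrow> vector_field A W \<longrightarrow>
        Lie_mult A (\<lambda>X Y. pr (pr X Y) P) (pr (pr X Y) P) Z W =
          vadd (pr (pr X (Lie_mult A (\<lambda>X Y. pr (pr X Y) P) Y Z W)) P)
               (pr (pr Y (Lie_mult A (\<lambda>X Y. pr (pr X Y) P) X Z W)) P)"
    moreover have "\<forall>g\<in>Cinf A. \<forall>X Y Z. vector_field A X \<longrightarrow> vector_field A Y \<longrightarrow> vector_field A Z \<longrightarrow>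
        pr (pr (vadd (fscale A g X) Y) Z) P = vadd (fscale A g (pr (pr X Z) P)) (pr (pr Y Z) P)"
      using P by (simp add: pr_lin)
    ultimately show "smooth_atlas A \<and>
    (\<forall>X Y. vector_field A X \<longrightarrow> vector_field A Y \<longrightarrow> vector_field A (pr (pr X Y) P)) \<and>
    (\<forall>X Y. vector_field A X \<longrightarrow> vector_field A Y \<longrightarrow> pr (pr X Y) P = pr (pr Y X) P) \<and>
    (\<forall>X Y Z. vector_field A X \<longrightarrow> vector_field A Y \<longrightarrow> vector_field A Z \<longrightarrow>
        pr (pr (pr (pr X Y) P) Z) P = pr (pr X (pr (pr Y Z) P)) P) \<and>
    (\<forall>g\<in>Cinf A. \<forall>X Y Z. vector_field A X \<longrightarrow> vector_field A Y \<longrightarrow> vector_field A Z \<longrightarrow>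
        pr (pr (vadd (fscale A g X) Y) Z) P = vadd (fscale A g (pr (pr X Z) P)) (pr (pr Y Z) P)) \<and>
    vector_field A E \<and>
    (\<forall>X. vector_field A X \<longrightarrow> pr (pr E X) P = X) \<and>
    (\<forall>X Y Z W. vector_field A X \<longrightarrow> vector_field A Y \<longrightarrow> vector_field A Z \<longrightarrow> vector_field A W \<longrightarrow>
        Lie_mult A (\<lambda>X Y. pr (pr X Y) P) (pr (pr X Y) P) Z W =
          vadd (pr (pr X (Lie_mult A (\<lambda>X Y. pr (pr X Y) P) Y Z W)) P)
               (pr (pr Y (Lie_mult A (\<lambda>X Y. pr (pr X Y) P) X Z W)) P))"
      using E P EPX by (simp add: R)
  qed simp
  have EI: "eventual_identity A pr e E \<longleftrightarrow>
       (\<forall>X Y. vector_field A X \<longrightarrow> vector_field A Y \<longrightarrow> Lie_mult A pr E X Y = pr (pr (lie A e E) X) Y)"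
    unfolding eventual_identity_def star using inv Fiff main_equiv[OF EP E P] by simp
  have II: "eventual_identity A (dual_mult A pr e E) E e \<and>
        (\<forall>X Y. vector_field A X \<longrightarrow> vector_field A Y \<longrightarrow>
           dual_mult A pr e E (dual_mult A pr e E X Y) (vinv A (dual_mult A pr e E) E e) = pr X Y)"
  proof -
    define s where "s = dual_mult A pr e E"
    have s: "s = (\<lambda>X Y. pr (pr X Y) P)" unfolding s_def star ..
    have EE: "pr (pr E E) P = E" using E P EP by (simp add: pr_assoc)
    have ex: "\<exists>Y. vector_field A Y \<and> s e Y = E"
      by (rule exI[of _ "pr E E"]) (use E P EE in \<open>simp add: s\<close>)
    define Q where "Q = vinv A s E e"
    have "vector_field A Q \<and> s e Q = E" unfolding Q_def vinv_def by (rule someI_ex[OF ex])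
    hence Q: "vector_field A Q" and "pr Q P = E" by (auto simp: s)
    hence h: "pr P Q = pr P (pr E E)" using EE P E pr_comm[of P Q] pr_comm[of P "pr E E"] by simp
    have QE: "Q = pr E E" by (rule cancel[OF EP E P _ _ h]) (use Q E in simp_all)
    have red: "s (s X Y) Q = pr X Y" if "vector_field A X" "vector_field A Y" for X Y
    proof -
      have "s (s X Y) Q = pr (pr (pr (pr E P) (pr E P)) X) Y"
        unfolding s QE using that E P by (simp add: R)
      thus ?thesis using EP that by simp
    qed
    have "F_manifold A (dual_mult A s E e) e"
      by (rule F_cong) (simp add: dual_mult_def Q_def[symmetric] red)
    moreover have "invertible_vf A s E e" unfolding invertible_vf_def using ex by simp
    ultimately show ?thesis using red unfolding eventual_identity_def s_def[symmetric] Q_def by simp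
  qed
  show ?thesis using EI II by (simp add: Let_def)
qed


end
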